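(* Let $G$ and $H$ be finite abelian groups, written additively, of the same even order $k$, and let $f:G\to H$ be semi-planar. Suppose $S(G,H;f)$ splits into two substructures $S_1$ and $S_2$ with $\mathcal{L}(0,0)\in S_1$, and let $B=\{b\in H : \mathcal{L}(0,b)\in S_1\}$ (a subgroup of $H$ of index $2$). Then for any $h\in H\setminus B$, the mapping $\phi_h:G\times H\to G\times H$, $\phi_h(x,y)=(x,y+h)$ (together with the induced map on lines $\mathcal{L}(a,b)\mapsto\mathcal{L}(a,b+h)$), is an isomorphism between the two substructures $S_1$ and $S_2$.
   Context: A function $f:G\to H$ is semi-planar if for every non-identity $a\in G$ and every $y\in H$, the equation $f(x+a)-f(x)=y$ has either $0$ or $2$ solutions $x\in G$. The incidence structure $S(G,H;f)$ has points $(x,y)\in G\times H$ and lines $\mathcal{L}(a,b)$ for $(a,b)\in G\times H$, with $(x,y)$ incident with $\mathcal{L}(a,b)$ iff $y=f(x-a)+b$. Its incidence graph is the bipartite graph on points and lines with an edge for each incident pair. $S(G,H;f)$ splits into two substructures $S_1,S_2$ if its incidence graph has exactly two connected components; $S_1,S_2$ are the incidence structures formed by the points and lines of the two components, and $\mathcal{L}(a,b)\in S_i$ means the line lies in component $S_i$. *)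

theory Defs
  imports Main
begin

definition semi_planar :: "('g::{ab_group_add,finite} \<Rightarrow> 'h::ab_group_add) \<Rightarrow> bool" where
  "semi_planar f \<longleftrightarrow>
     (\<forall>a. a \<noteq> 0 \<longrightarrow> (\<forall>y. card {x. f (x + a) - f x = y} \<in> {0, 2}))"

text \<open>Points and lines of S(G,H;f) are both indexed by G \<times> H; the line (a,b) is L(a,b).
  Point (x,y) is incident with L(a,b) iff y = f(x - a) + b.\<close>

definition incident :: "('g::ab_group_add \<Rightarrow> 'h::ab_group_add) \<Rightarrow> 'g \<times> 'h \<Rightarrow> 'g \<times> 'h \<Rightarrow> bool" where
  "incident f p l \<longleftrightarrow> snd p = f (fst p - fst l) + snd l"

text \<open>Vertices of the incidence graph: Inl p is a point, Inr l is a line.\<close>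

type_synonym ('g, 'h) vertex = "('g \<times> 'h) + ('g \<times> 'h)"

definition inc_edges :: "('g::ab_group_add \<Rightarrow> 'h::ab_group_add) \<Rightarrow> (('g,'h) vertex \<times> ('g,'h) vertex) set" where
  "inc_edges f = {(u, v). \<exists>p l. incident f p l \<and>
       ((u = Inl p \<and> v = Inr l) \<or> (u = Inr l \<and> v = Inl p))}"

definition connected_in :: "('g::ab_group_add \<Rightarrow> 'h::ab_group_add) \<Rightarrow> (('g,'h) vertex \<times> ('g,'h) vertex) set" where
  "connected_in f = (inc_edges f)\<^sup>*"

definition components :: "('g::ab_group_add \<Rightarrow> 'h::ab_group_add) \<Rightarrow> ('g,'h) vertex set set" where
  "components f = UNIV // connected_in f"

definition component_of :: "('g::ab_group_add \<Rightarrow> 'h::ab_group_add) \<Rightarrow> ('g,'h) vertex \<Rightarrow> ('g,'h) vertex set" where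
  "component_of f v = connected_in f `` {v}"

text \<open>S(G,H;f) splits into two substructures: the incidence graph has exactly two components.\<close>

definition splits_in_two :: "('g::{ab_group_add,finite} \<Rightarrow> 'h::{ab_group_add,finite}) \<Rightarrow> bool" where
  "splits_in_two f \<longleftrightarrow> card (components f) = 2"

definition shift_vertex :: "'h::ab_group_add \<Rightarrow> ('g,'h) vertex \<Rightarrow> ('g,'h) vertex" where
  "shift_vertex h v = (case v of Inl (x, y) \<Rightarrow> Inl (x, y + h) | Inr (a, b) \<Rightarrow> Inr (a, b + h))"

end

theory Submission
  imports Defs
begin

lemma shift_shift: "shift_vertex a (shift_vertex b v) = shift_vertex (b + a) v"
  by (cases v) (auto simp: shift_vertex_def add.assoc)

lemma shift_zero: "shift_vertex 0 v = v"
  by (cases v) (auto simp: shift_vertex_def)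

lemma shift_inj: "inj (shift_vertex h)"
  by (metis injI shift_shift shift_zero add.right_inverse)

lemma shift_edge:
  assumes "(u,v) \<in> inc_edges f"
  shows "(shift_vertex h u, shift_vertex h v) \<in> inc_edges f"
proof -
  from assms obtain p l where i: "incident f p l" and
    uv: "(u = Inl p \<and> v = Inr l) \<or> (u = Inr l \<and> v = Inl p)"
    unfolding inc_edges_def by blast
  obtain x y where p: "p = (x,y)" by (cases p)
  obtain a b where l: "l = (a,b)" by (cases l)
  have i2: "incident f (x, y+h) (a, b+h)" using i p l by (auto simp: incident_def)
  show ?thesis using uv i2 p l unfolding inc_edges_def shift_vertex_def by auto
qed

lemma shift_conn:
  assumes "(u,v) \<in> connected_in f"
  shows "(shift_vertex h u, shift_vertex h v) \<in> connected_in f"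
  using assms unfolding connected_in_def
proof (induction rule: rtrancl_induct)
  case base then show ?case by simp
next
  case (step y z) then show ?case by (meson rtrancl.rtrancl_into_rtrancl shift_edge)
qed

lemma shift_comp: "component_of f (shift_vertex h v) = shift_vertex h ` component_of f v"
proof
  show "shift_vertex h ` component_of f v \<subseteq> component_of f (shift_vertex h v)"
    unfolding component_of_def using shift_conn by fastforce
next
  show "component_of f (shift_vertex h v) \<subseteq> shift_vertex h ` component_of f v"
  proof
    fix x assume "x \<in> component_of f (shift_vertex h v)"
    then have "(shift_vertex h v, x) \<in> connected_in f" unfolding component_of_def by simp
    from shift_conn[OF this, of "-h"]
    have "(v, shift_vertex (-h) x) \<in> connected_in f" by (simp add: shift_shift shift_zero)
    moreover have "x = shift_vertex h (shift_vertex (-h) x)" by (simp add: shift_shift shift_zero)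
    ultimately show "x \<in> shift_vertex h ` component_of f v" unfolding component_of_def by blast
  qed
qed

lemma equiv_conn: "equiv UNIV (connected_in f)"
proof -
  have "sym (inc_edges f)" unfolding sym_def inc_edges_def by blast
  then have "sym (connected_in f)" unfolding connected_in_def by (rule sym_rtrancl)
  moreover have "refl (connected_in f)" unfolding connected_in_def by (simp add: refl_rtrancl)
  moreover have "trans (connected_in f)" unfolding connected_in_def by (simp add: trans_rtrancl)
  ultimately show ?thesis by (simp add: equiv_def)
qed

theorem corollary1:
  fixes f :: "'g::{ab_group_add,finite} \<Rightarrow> 'h::{ab_group_add,finite}"
    and h :: 'h
  assumes "card (UNIV :: 'g set) = card (UNIV :: 'h set)"
    and "even (card (UNIV :: 'g set))"
    and "semi_planar f"
    and "splits_in_two f"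
    and "h \<notin> {b. Inr (0, b) \<in> component_of f (Inr (0, 0))}"
  shows "let S1 = component_of f (Inr (0, 0)); S2 = UNIV - S1 in
           S2 \<in> components f \<and>
           bij_betw (shift_vertex h) S1 S2 \<and>
           (\<forall>p l. Inl p \<in> S1 \<longrightarrow> Inr l \<in> S1 \<longrightarrow>
              (incident f p l \<longleftrightarrow> incident f (fst p, snd p + h) (fst l, snd l + h)))"
proof -
  define R where "R = connected_in f"
  have eq: "equiv UNIV R" unfolding R_def by (rule equiv_conn)
  define S1 where "S1 = component_of f (Inr (0, 0))"
  define C where "C = component_of f (Inr (0, h))"
  have S1q: "S1 \<in> components f" unfolding S1_def components_def component_of_def
    by (rule quotientI) simp
  have Cq: "C \<in> components f" unfolding C_def components_def component_of_def
    by (rule quotientI) simp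
  have hC: "Inr (0,h) \<in> C" unfolding C_def component_of_def
    using eq R_def equiv_class_self by fastforce
  have hS: "Inr (0,h) \<notin> S1" using assms(5) S1_def by simp
  have ne: "C \<noteq> S1" using hC hS by blast
  have fin: "finite (components f)" by simp
  have cc: "components f = {S1, C}"
  proof (rule ccontr)
    assume "components f \<noteq> {S1, C}"
    then obtain D where "D \<in> components f" "D \<notin> {S1, C}" using S1q Cq by blast
    then have "{S1, C, D} \<subseteq> components f" using S1q Cq by blast
    then have "card {S1, C, D} \<le> card (components f)" using fin card_mono by blast
    moreover have "card {S1, C, D} = 3" using ne \<open>D \<notin> {S1, C}\<close>
      by (simp add: card_insert_if) metis
    ultimately show False using assms(4) unfolding splits_in_two_def by simp
  qed
  have CS2: "C = UNIV - S1"
  proof -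
    have un: "\<Union>(components f) = UNIV" unfolding components_def
      using Union_quotient[OF eq[unfolded R_def]] by simp
    have dj: "C \<inter> S1 = {}" using quotient_disj[OF eq[unfolded R_def], of C S1] Cq S1q ne
      unfolding components_def by blast
    show ?thesis using un dj cc by auto
  qed
  have img: "shift_vertex h ` S1 = C" unfolding S1_def C_def
    using shift_comp[of f h "Inr (0,0)"] by (simp add: shift_vertex_def)
  have bij: "bij_betw (shift_vertex h) S1 C"
    using img shift_inj[of h] by (metis bij_betw_def inj_on_subset subset_UNIV)
  have inc: "\<forall>p l. incident f p l \<longleftrightarrow> incident f (fst p, snd p + h) (fst l, snd l + h)"
    by (auto simp: incident_def)
  show ?thesis unfolding Let_def S1_def[symmetric] using CS2 Cq bij inc by simp
qed

end
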